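(* Let $G=(V\cup C,E)$ be a protograph and let $\epsilon\in[0,1]$. Suppose the degree-2 subgraph $G_2$ contains a cycle. Then for every edge $e_i$ of that cycle and every $t\ge 0$, the BEC density evolution quantities satisfy $x_t(i)\ge \epsilon^{t+1}$. In particular, for $\epsilon>0$, $x_t(i)$ does not decay double-exponentially in $t$ (i.e., there are no positive constants $\alpha,\beta,K$ with $x_t(i)\le K\exp(-\beta 2^{\alpha t})$ for all large $t$).
   Context: A protograph is a finite bipartite multigraph $G=(V\cup C,E)$ with variable (bit) nodes $V$, check nodes $C$, and ordered edges $E=\{e_1,\dots,e_{|E|}\}$; parallel edges between a variable node and a check node are allowed. For an edge $e$, $v(e)$ and $c(e)$ denote its variable-node and check-node endpoints. The degree of a node is the number of incident edges counted with multiplicity. For an edge $e$, $E_c(e)=\{i: c(e_i)=c(e),\ e_i\neq e\}$ and $E_v(e)=\{i: v(e_i)=v(e),\ e_i\ne e\}$. The degree-2 subgraph $G_2$ of $G$ consists of all degree-2 variable nodes, all edges incident to them, and the check nodes incident to those edges; a cycle in $G_2$ may have length $2$ (two parallel edges between the same variable and check node). Protograph density evolution over BEC$(\epsilon)$: $x_0(i)=\epsilon$ for all $i$, and for $t\ge 0$, $y_{t+1}(j)=1-\prod_{i\in E_c(e_j)}(1-x_t(i))$, $x_{t+1}(i)=\epsilon\prod_{j\in E_v(e_i)}y_{t+1}(j)$ (empty products equal $1$). *)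

theory Defs
  imports Complex_Main
begin

text \<open>A protograph with edges e_0, ..., e_{m-1} (indices i < m); edge i joins
  variable node ve i and check node ce i. Parallel edges are allowed.\<close>

definition protograph :: "'v set \<Rightarrow> 'c set \<Rightarrow> nat \<Rightarrow> (nat \<Rightarrow> 'v) \<Rightarrow> (nat \<Rightarrow> 'c) \<Rightarrow> bool" where
  "protograph V C m ve ce \<longleftrightarrow> finite V \<and> finite C \<and> (\<forall>i<m. ve i \<in> V \<and> ce i \<in> C)"

definition Ec :: "nat \<Rightarrow> (nat \<Rightarrow> 'c) \<Rightarrow> nat \<Rightarrow> nat set" where
  "Ec m ce i = {k. k < m \<and> ce k = ce i \<and> k \<noteq> i}"

definition Ev :: "nat \<Rightarrow> (nat \<Rightarrow> 'v) \<Rightarrow> nat \<Rightarrow> nat set" where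
  "Ev m ve i = {k. k < m \<and> ve k = ve i \<and> k \<noteq> i}"

definition vdeg :: "nat \<Rightarrow> (nat \<Rightarrow> 'v) \<Rightarrow> 'v \<Rightarrow> nat" where
  "vdeg m ve v = card {i. i < m \<and> ve i = v}"

primrec bec_x :: "nat \<Rightarrow> (nat \<Rightarrow> 'v) \<Rightarrow> (nat \<Rightarrow> 'c) \<Rightarrow> real \<Rightarrow> nat \<Rightarrow> nat \<Rightarrow> real" where
  "bec_x m ve ce eps 0 = (\<lambda>i. eps)"
| "bec_x m ve ce eps (Suc t) =
     (\<lambda>i. eps * (\<Prod>j\<in>Ev m ve i. 1 - (\<Prod>k\<in>Ec m ce j. 1 - bec_x m ve ce eps t k)))"

text \<open>y_{t+1}(j), for reference.\<close>
definition bec_y :: "nat \<Rightarrow> (nat \<Rightarrow> 'v) \<Rightarrow> (nat \<Rightarrow> 'c) \<Rightarrow> real \<Rightarrow> nat \<Rightarrow> nat \<Rightarrow> real" where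
  "bec_y m ve ce eps t j = 1 - (\<Prod>k\<in>Ec m ce j. 1 - bec_x m ve ce eps t k)"

text \<open>A cycle in the degree-2 subgraph G_2, given as the list of its edges
  js = [a_0, b_0, a_1, b_1, ..., a_{L-1}, b_{L-1}] (L >= 1, length 2L):
  a_p and b_p share the variable node v_p (of degree 2), b_p and a_{p+1 mod L}
  share the check node c_p; edges are distinct, the v_p are distinct and the
  c_p are distinct. L = 1 gives a length-2 cycle (two parallel edges).\<close>

definition G2_cycle :: "nat \<Rightarrow> (nat \<Rightarrow> 'v) \<Rightarrow> (nat \<Rightarrow> 'c) \<Rightarrow> nat list \<Rightarrow> bool" where
  "G2_cycle m ve ce js \<longleftrightarrow>
     (let n = length js in
       even n \<and> n \<ge> 2 \<and> distinct js \<and> set js \<subseteq> {..<m} \<and>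
       (\<forall>j\<in>set js. vdeg m ve (ve j) = 2) \<and>
       (\<forall>p < n div 2. ve (js ! (2*p)) = ve (js ! (2*p+1)) \<and>
                       ce (js ! (2*p+1)) = ce (js ! ((2*p+2) mod n))) \<and>
       inj_on (\<lambda>p. ve (js ! (2*p))) {..<n div 2} \<and>
       inj_on (\<lambda>p. ce (js ! (2*p+1))) {..<n div 2})"

end

theory Submission
  imports Defs "HOL-Real_Asymp.Real_Asymp"
begin

lemma bec_x_range:
  assumes "0 \<le> eps" "eps \<le> 1"
  shows "0 \<le> bec_x m ve ce eps t k \<and> bec_x m ve ce eps t k \<le> 1"
proof (induction t arbitrary: k)
  case 0 then show ?case using assms by simp
next
  case (Suc t)
  have a: "\<And>j. 0 \<le> (\<Prod>k\<in>Ec m ce j. 1 - bec_x m ve ce eps t k) \<and> (\<Prod>k\<in>Ec m ce j. 1 - bec_x m ve ce eps t k) \<le> 1"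
    using Suc by (auto intro!: prod_nonneg prod_le_1)
  have b: "0 \<le> (\<Prod>j\<in>Ev m ve k. 1 - (\<Prod>k\<in>Ec m ce j. 1 - bec_x m ve ce eps t k))
     \<and> (\<Prod>j\<in>Ev m ve k. 1 - (\<Prod>k\<in>Ec m ce j. 1 - bec_x m ve ce eps t k)) \<le> 1"
    using a by (auto intro!: prod_nonneg prod_le_1 simp: algebra_simps)
  show ?case using b assms by (simp add: mult_le_one)
qed

lemma one_minus_prod_ge:
  fixes a :: "nat \<Rightarrow> real"
  assumes "finite S" "k0 \<in> S" "\<And>k. k \<in> S \<Longrightarrow> 0 \<le> a k \<and> a k \<le> 1"
  shows "a k0 \<le> 1 - (\<Prod>k\<in>S. 1 - a k)"
proof -
  have "(\<Prod>k\<in>S. 1 - a k) = (1 - a k0) * (\<Prod>k\<in>S-{k0}. 1 - a k)"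
    using assms by (simp add: prod.remove)
  also have "\<dots> \<le> (1 - a k0) * 1"
    using assms by (intro mult_left_mono prod_le_1) auto
  finally show ?thesis by simp
qed

lemma step:
  assumes r: "0 \<le> eps" "eps \<le> 1"
    and jm: "j < m" and im: "i < m" and ji: "j \<noteq> i" and vj: "ve j = ve i"
    and deg: "vdeg m ve (ve i) = 2"
    and km: "k < m" and kj: "k \<noteq> j" and ck: "ce k = ce j"
  shows "eps * bec_x m ve ce eps t k \<le> bec_x m ve ce eps (Suc t) i"
proof -
  have "{i,j} = {l. l < m \<and> ve l = ve i}"
  proof (rule card_seteq)
    show "finite {l. l < m \<and> ve l = ve i}" by simp
    show "{i,j} \<subseteq> {l. l < m \<and> ve l = ve i}" using jm im vj by auto
    show "card {l. l < m \<and> ve l = ve i} \<le> card {i,j}" using deg ji unfolding vdeg_def by simp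
  qed
  hence S: "{l. l < m \<and> ve l = ve i} = {i, j}" by simp
  have Ev: "Ev m ve i = {j}" unfolding Ev_def using S ji by auto
  have kin: "k \<in> Ec m ce j" unfolding Ec_def using km kj ck by auto
  have "bec_x m ve ce eps t k \<le> 1 - (\<Prod>l\<in>Ec m ce j. 1 - bec_x m ve ce eps t l)"
    by (rule one_minus_prod_ge) (auto simp: Ec_def km ck kj bec_x_range[OF r])
  then show ?thesis using Ev r by (simp add: mult_left_mono)
qed

lemma lower:
  assumes r: "0 \<le> eps" "eps \<le> 1" and cyc: "G2_cycle m ve ce js"
  shows "\<forall>q < length js. bec_x m ve ce eps t (js ! q) \<ge> eps ^ (t + 1)"
proof (induction t)
  case 0 then show ?case by simp
next
  case (Suc t)
  define n where "n = length js"
  have ev: "even n" and n2: "n \<ge> 2" and dist: "distinct js" and sub: "set js \<subseteq> {..<m}"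
    and deg: "\<forall>j\<in>set js. vdeg m ve (ve j) = 2"
    and st: "\<forall>p < n div 2. ve (js ! (2*p)) = ve (js ! (2*p+1)) \<and>
                       ce (js ! (2*p+1)) = ce (js ! ((2*p+2) mod n))"
    using cyc unfolding G2_cycle_def n_def Let_def by auto
  have mem: "\<And>q. q < n \<Longrightarrow> js ! q \<in> set js" by (simp add: n_def)
  have lt: "\<And>q. q < n \<Longrightarrow> js ! q < m" using sub mem by auto
  have neq: "\<And>a b. a < n \<Longrightarrow> b < n \<Longrightarrow> a \<noteq> b \<Longrightarrow> js ! a \<noteq> js ! b"
    using dist by (simp add: n_def nth_eq_iff_index_eq)
  have key: "\<And>q P N. q < n \<Longrightarrow> P < n \<Longrightarrow> N < n \<Longrightarrow> P \<noteq> q \<Longrightarrow> N \<noteq> P \<Longrightarrow>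
     ve (js ! P) = ve (js ! q) \<Longrightarrow> ce (js ! N) = ce (js ! P) \<Longrightarrow>
     eps ^ (Suc t + 1) \<le> bec_x m ve ce eps (Suc t) (js ! q)"
  proof -
    fix q P N assume h: "q < n" "P < n" "N < n" "P \<noteq> q" "N \<noteq> P"
      "ve (js ! P) = ve (js ! q)" "ce (js ! N) = ce (js ! P)"
    have "eps * bec_x m ve ce eps t (js ! N) \<le> bec_x m ve ce eps (Suc t) (js ! q)"
      by (rule step[OF r]) (use h lt neq deg mem in auto)
    moreover have "eps * eps ^ (t+1) \<le> eps * bec_x m ve ce eps t (js ! N)"
      using Suc h r by (intro mult_left_mono) (auto simp: n_def)
    ultimately show "eps ^ (Suc t + 1) \<le> bec_x m ve ce eps (Suc t) (js ! q)" by simp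
  qed
  show ?case
  proof (intro allI impI)
    fix q assume q: "q < length js"
    hence qn: "q < n" by (simp add: n_def)
    show "eps ^ (Suc t + 1) \<le> bec_x m ve ce eps (Suc t) (js ! q)"
    proof (cases "even q")
      case True
      then obtain p where p: "q = 2*p" by auto
      have pl: "p < n div 2" using p qn ev by auto
      have q1: "2*p+1 < n" 
      proof -
        from ev obtain k where "n = 2*k" by auto
        with p qn show ?thesis by presburger
      qed
      have "even ((2*p+2) mod n)" using ev by (intro dvd_mod) auto
      hence ne: "(2*p+2) mod n \<noteq> 2*p+1" by auto
        have "ve (js ! (2*p)) = ve (js ! (2*p+1)) \<and> ce (js ! (2*p+1)) = ce (js ! ((2*p+2) mod n))"
          using st pl by blast
        moreover have "(2*p+2) mod n < n" using n2 by auto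
        ultimately show ?thesis
          using key[of q "2*p+1" "(2*p+2) mod n"] qn q1 ne p by auto
    next
      case False
      then obtain p where p: "q = 2*p+1" by (metis oddE)
      have pl: "p < n div 2" using p qn ev by auto
      show ?thesis
      proof (cases p)
        case 0
        have nn: "n - 1 = 2*(n div 2 - 1) + 1" using ev n2 by auto
        have nn2: "(2*(n div 2 - 1) + 2) mod n = 0"
        proof -
          from ev obtain k where "n = 2*k" by auto
          with n2 show ?thesis by (cases k) auto
        qed
        have "ce (js ! (n-1)) = ce (js ! 0)"
          using st[rule_format, of "n div 2 - 1"] n2 nn nn2 by auto
        moreover have "n - 1 \<noteq> 0" using n2 by auto
        moreover have "ve (js ! 0) = ve (js ! 1)" using st[rule_format, of 0] n2 by auto
        moreover have "n - 1 < n" using n2 by auto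
        ultimately show ?thesis
          using key[of q "2*p" "n-1"] qn p 0 by auto
      next
        case (Suc p')
        have e: "(2*p'+2) mod n = 2*p" using Suc qn p by auto
        have c1: "ce (js ! (2*p'+1)) = ce (js ! (2*p))"
          using st[rule_format, of p'] pl Suc e by auto
        have v1: "ve (js ! (2*p)) = ve (js ! (2*p+1))" using st[rule_format, of p] pl by blast
        have v2: "ve (js ! (2*p)) = ve (js ! q)" using v1 p by simp
        have a1: "2*p'+1 < n" using Suc qn p by linarith
        have a2: "2*p'+1 \<noteq> 2*p" using Suc by linarith
        have a3: "2*p < n" "2*p \<noteq> q" using qn p by linarith+
        show ?thesis by (rule key[OF qn a3(1) a1 a3(2) a2 v2 c1])
      qed
    qed
  qed
qed

theorem mainTheorem2:
  fixes V :: "'v set" and C :: "'c set" and m :: nat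
    and ve :: "nat \<Rightarrow> 'v" and ce :: "nat \<Rightarrow> 'c"
    and eps :: real and js :: "nat list"
  assumes "protograph V C m ve ce"
    and "0 \<le> eps" and "eps \<le> 1"
    and "G2_cycle m ve ce js"
  shows "\<forall>i\<in>set js. (\<forall>t. bec_x m ve ce eps t i \<ge> eps ^ (t + 1)) \<and>
           (eps > 0 \<longrightarrow>
              \<not> (\<exists>\<alpha> \<beta> K. \<alpha> > 0 \<and> \<beta> > 0 \<and> K > 0 \<and>
                   (\<forall>\<^sub>F t in sequentially.
                      bec_x m ve ce eps t i \<le> K * exp (- \<beta> * 2 powr (\<alpha> * real t)))))"
proof
  fix i assume i: "i \<in> set js"
  then obtain q where q: "q < length js" "i = js ! q" by (metis in_set_conv_nth)
  have lb: "\<forall>t. bec_x m ve ce eps t i \<ge> eps ^ (t + 1)"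
    using lower[OF assms(2,3,4)] q by auto
  show "(\<forall>t. bec_x m ve ce eps t i \<ge> eps ^ (t + 1)) \<and>
           (eps > 0 \<longrightarrow>
              \<not> (\<exists>\<alpha> \<beta> K. \<alpha> > 0 \<and> \<beta> > 0 \<and> K > 0 \<and>
                   (\<forall>\<^sub>F t in sequentially.
                      bec_x m ve ce eps t i \<le> K * exp (- \<beta> * 2 powr (\<alpha> * real t)))))"
  proof (intro conjI lb impI notI)
    assume ep: "eps > 0"
    assume "\<exists>\<alpha> \<beta> K. \<alpha> > 0 \<and> \<beta> > 0 \<and> K > 0 \<and>
                   (\<forall>\<^sub>F t in sequentially.
                      bec_x m ve ce eps t i \<le> K * exp (- \<beta> * 2 powr (\<alpha> * real t)))"
    then obtain \<alpha> \<beta> K where h: "\<alpha> > 0" "\<beta> > 0" "K > 0"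
      "\<forall>\<^sub>F t in sequentially. bec_x m ve ce eps t i \<le> K * exp (- \<beta> * 2 powr (\<alpha> * real t))"
      by blast
    have lim: "filterlim (\<lambda>x::nat. \<beta>*2 powr(\<alpha>*real x) + (real x+1)*ln eps - ln K) at_top sequentially"
      using h(1,2) by real_asymp
    have ev2: "\<forall>\<^sub>F t in sequentially. \<beta>*2 powr(\<alpha>*real t) + (real t+1)*ln eps - ln K > 0"
      using lim unfolding filterlim_at_top_dense by blast
    have "\<forall>\<^sub>F t in sequentially. False"
      using h(4) ev2
    proof eventually_elim
      case (elim t)
      have "eps ^ (t+1) = exp (ln (eps ^ (t+1)))" by (intro exp_ln[symmetric]) (use ep in simp)
      also have "\<dots> = exp ((real t + 1) * ln eps)" by (subst ln_realpow) (use ep in auto)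
      also have "\<dots> > exp (ln K - \<beta>*2 powr(\<alpha>*real t))"
        by (subst exp_less_cancel_iff) (use elim(2) in linarith)
      also have "exp (ln K - \<beta>*2 powr(\<alpha>*real t)) = K * exp (- \<beta> * 2 powr (\<alpha> * real t))"
        using h(3) by (simp add: exp_diff exp_minus field_simps)
      finally have "K * exp (- \<beta> * 2 powr (\<alpha> * real t)) < eps ^ (t+1)" .
      moreover have "eps ^ (t+1) \<le> bec_x m ve ce eps t i" using lb by blast
      ultimately show False using elim(1) by linarith
    qed
    then show False by simp
  qed
qed

end
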